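(* Let $n\ge2$ and $\Delta\subset B_n$ a proper ideal. For each facet $(A;x)$ of $\mathrm{Bier}(B_n,\Delta)$ define $\chi(A;x)\in\{-1,0,1\}^n$ by $\chi(A;x)_a=-1$ if $a\in A\cup\{x\}$ and $a\le x$; $\chi(A;x)_a=0$ if $a\notin A\cup\{x\}$; $\chi(A;x)_a=+1$ if $a\in A\cup\{x\}$ and $a>x$. Then ordering the facets so that $\chi$ increases in lexicographic order is a shelling order of $\mathrm{Bier}(B_n,\Delta)$.
   Context: $B_n$ is the Boolean lattice of subsets of $[1,n]=\{1,\dots,n\}$. A proper ideal $\Delta\subset B_n$ is a nonempty family of subsets of $[1,n]$ closed under taking subsets with $[1,n]\notin\Delta$. The Bier sphere $\mathrm{Bier}(B_n,\Delta)$ is the simplicial complex whose faces are the pairs $(B,C)$ with $B\subsetneq C\subseteq[1,n]$, $B\in\Delta$, $C\notin\Delta$, with $(B',C')$ a face of $(B,C)$ iff $B'\subseteq B$ and $C\subseteq C'$ (concretely $(B,C)$ is the vertex set $B\sqcup\{\bar d: d\notin C\}$ on $[1,n]\sqcup\{\bar1,\dots,\bar n\}$). Its facets are $(A;x):=(A,A\cup\{x\})$ with $A\in\Delta$, $x\notin A$, $A\cup\{x\}\notin\Delta$. Lexicographic order: $u<_{\mathrm{lex}}v$ if at the first coordinate where they differ, $u$ is smaller. A shelling order of a pure complex is an ordering $F_1,F_2,\dots$ of its facets such that for each $k\ge2$, $F_k\cap(F_1\cup\dots\cup F_{k-1})$ is pure of dimension $\dim F_k-1$. *)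

theory Defs
  imports Main
begin

text \<open>Ground set [1,n] = {1..n}. Vertices of the Bier sphere live in nat + nat:
  Inl d is the vertex d, Inr d is the vertex bar d.\<close>

definition proper_ideal :: "nat \<Rightarrow> nat set set \<Rightarrow> bool" where
  "proper_ideal n D \<longleftrightarrow> D \<noteq> {} \<and> (\<forall>B\<in>D. B \<subseteq> {1..n}) \<and>
     (\<forall>B\<in>D. \<forall>B'. B' \<subseteq> B \<longrightarrow> B' \<in> D) \<and> {1..n} \<notin> D"

definition bier_vs :: "nat \<Rightarrow> nat set \<Rightarrow> nat set \<Rightarrow> (nat + nat) set" where
  "bier_vs n B C = Inl ` B \<union> Inr ` ({1..n} - C)"

definition bier :: "nat \<Rightarrow> nat set set \<Rightarrow> (nat + nat) set set" where
  "bier n D = {bier_vs n B C | B C. B \<subset> C \<and> C \<subseteq> {1..n} \<and> B \<in> D \<and> C \<notin> D}"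

definition facets :: "'a set set \<Rightarrow> 'a set set" where
  "facets K = {F \<in> K. \<forall>G\<in>K. F \<subseteq> G \<longrightarrow> G = F}"

definition sdim :: "'a set \<Rightarrow> int" where
  "sdim F = int (card F) - 1"

definition pure_of_dim :: "'a set set \<Rightarrow> int \<Rightarrow> bool" where
  "pure_of_dim K d \<longleftrightarrow> K \<noteq> {} \<and> (\<forall>F\<in>facets K. sdim F = d)"

text \<open>Shelling order of a pure complex K: an ordering Fs of all facets such that, for every
  k \<ge> 2 (0-based index k \<ge> 1), the subcomplex  F_k \<inter> (F_1 \<union> ... \<union> F_{k-1})  (faces of F_k
  lying in some earlier facet) is pure of dimension dim F_k - 1.\<close>
definition shelling_order :: "'a set set \<Rightarrow> 'a set list \<Rightarrow> bool" where
  "shelling_order K Fs \<longleftrightarrow> distinct Fs \<and> set Fs = facets K \<and>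
     (\<forall>k. 1 \<le> k \<and> k < length Fs \<longrightarrow>
        pure_of_dim {G. G \<subseteq> Fs ! k \<and> (\<exists>i<k. G \<subseteq> Fs ! i)} (sdim (Fs ! k) - 1))"

text \<open>Facet (A;x) = (A, A \<union> {x}) and its sign vector chi(A;x) in {-1,0,1}^n.\<close>
definition is_facet_pair :: "nat \<Rightarrow> nat set set \<Rightarrow> nat set \<Rightarrow> nat \<Rightarrow> bool" where
  "is_facet_pair n D A x \<longleftrightarrow> A \<in> D \<and> x \<in> {1..n} \<and> x \<notin> A \<and> insert x A \<notin> D"

definition chi :: "nat set \<Rightarrow> nat \<Rightarrow> nat \<Rightarrow> int" where
  "chi A x a = (if a \<in> insert x A then (if a \<le> x then -1 else 1) else 0)"

definition lex_less :: "nat \<Rightarrow> (nat \<Rightarrow> int) \<Rightarrow> (nat \<Rightarrow> int) \<Rightarrow> bool" where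
  "lex_less n u v \<longleftrightarrow> (\<exists>i\<in>{1..n}. (\<forall>j\<in>{1..<i}. u j = v j) \<and> u i < v i)"

end

theory Submission
  imports Defs
begin

lemma bv_Inl[simp]: "Inl a \<in> bier_vs n B C \<longleftrightarrow> a \<in> B"
  by (auto simp: bier_vs_def)

lemma bv_Inr[simp]: "Inr d \<in> bier_vs n B C \<longleftrightarrow> d \<in> {1..n} \<and> d \<notin> C"
  by (auto simp: bier_vs_def)

lemma bv_sub:
  assumes "C \<subseteq> {1..n}" "C' \<subseteq> {1..n}"
  shows "bier_vs n B C \<subseteq> bier_vs n B' C' \<longleftrightarrow> B \<subseteq> B' \<and> C' \<subseteq> C"
proof
  assume h: "bier_vs n B C \<subseteq> bier_vs n B' C'"
  have "B \<subseteq> B'" using h bv_Inl by blast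
  moreover have "C' \<subseteq> C"
  proof
    fix c assume "c \<in> C'"
    show "c \<in> C"
    proof (rule ccontr)
      assume "c \<notin> C"
      then have "Inr c \<in> bier_vs n B C" using \<open>c \<in> C'\<close> assms by auto
      then have "Inr c \<in> bier_vs n B' C'" using h by blast
      then show False using \<open>c \<in> C'\<close> by simp
    qed
  qed
  ultimately show "B \<subseteq> B' \<and> C' \<subseteq> C" by blast
next
  assume "B \<subseteq> B' \<and> C' \<subseteq> C"
  then show "bier_vs n B C \<subseteq> bier_vs n B' C'"
    by (auto simp: bier_vs_def)
qed

lemma pi_sub: "proper_ideal n D \<Longrightarrow> A \<in> D \<Longrightarrow> A \<subseteq> {1..n}"
  by (auto simp: proper_ideal_def)

lemma pi_down: "proper_ideal n D \<Longrightarrow> A \<in> D \<Longrightarrow> B \<subseteq> A \<Longrightarrow> B \<in> D"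
  by (auto simp: proper_ideal_def)

lemma fp_sub: "proper_ideal n D \<Longrightarrow> is_facet_pair n D A x \<Longrightarrow> insert x A \<subseteq> {1..n}"
  unfolding is_facet_pair_def using pi_sub by blast

lemma face_in_facet:
  assumes pi: "proper_ideal n D" and "B \<subset> C" "C \<subseteq> {1..n}" "B \<in> D" "C \<notin> D"
  shows "\<exists>A x. is_facet_pair n D A x \<and> B \<subseteq> A \<and> insert x A \<subseteq> C"
proof -
  define M where "M = {A \<in> D. B \<subseteq> A \<and> A \<subseteq> C}"
  have fC: "finite C" using assms(3) finite_subset by blast
  have fM: "finite M" unfolding M_def
    by (rule finite_subset[of _ "Pow C"]) (use fC in auto)
  have "B \<in> M" using assms unfolding M_def by auto
  define m where "m = Max (card ` M)"
  have "m \<in> card ` M" unfolding m_def using fM \<open>B \<in> M\<close> by (intro Max_in) auto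
  then obtain A where A: "A \<in> M" "card A = m" by auto
  have mx: "\<And>A'. A' \<in> M \<Longrightarrow> card A' \<le> m" unfolding m_def using fM by auto
  have "A \<noteq> C" using A assms unfolding M_def by auto
  then obtain x where x: "x \<in> C" "x \<notin> A" using A unfolding M_def by blast
  have fA: "finite A" using A fC unfolding M_def by (auto intro: finite_subset)
  have "insert x A \<notin> D"
  proof
    assume "insert x A \<in> D"
    then have "insert x A \<in> M" using A x unfolding M_def by auto
    then have "card (insert x A) \<le> m" by (rule mx)
    then show False using A fA x by simp
  qed
  then have "is_facet_pair n D A x" using A x assms unfolding M_def is_facet_pair_def by auto
  then show ?thesis using A x unfolding M_def by auto
qed

lemma facets_bier:
  assumes pi: "proper_ideal n D"
  shows "facets (bier n D) = {bier_vs n A (insert x A) | A x. is_facet_pair n D A x}"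
proof
  show "facets (bier n D) \<subseteq> {bier_vs n A (insert x A) | A x. is_facet_pair n D A x}"
  proof
    fix G assume G: "G \<in> facets (bier n D)"
    then obtain B C where BC: "G = bier_vs n B C" "B \<subset> C" "C \<subseteq> {1..n}" "B \<in> D" "C \<notin> D"
      unfolding facets_def bier_def by auto
    obtain A x where Ax: "is_facet_pair n D A x" "B \<subseteq> A" "insert x A \<subseteq> C"
      using face_in_facet[OF pi BC(2-5)] by blast
    have sub: "G \<subseteq> bier_vs n A (insert x A)" using BC Ax bv_sub[OF BC(3) fp_sub[OF pi Ax(1)]] by auto
    have "bier_vs n A (insert x A) \<in> bier n D" using Ax fp_sub[OF pi Ax(1)]
      unfolding bier_def is_facet_pair_def by blast
    then have "bier_vs n A (insert x A) = G" using G sub unfolding facets_def by auto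
    then show "G \<in> {bier_vs n A (insert x A) | A x. is_facet_pair n D A x}" using Ax by blast
  qed
next
  show "{bier_vs n A (insert x A) | A x. is_facet_pair n D A x} \<subseteq> facets (bier n D)"
  proof
    fix G assume "G \<in> {bier_vs n A (insert x A) | A x. is_facet_pair n D A x}"
    then obtain A x where Ax: "G = bier_vs n A (insert x A)" "is_facet_pair n D A x" by blast
    have S: "insert x A \<subseteq> {1..n}" using fp_sub[OF pi Ax(2)] .
    have Gin: "G \<in> bier n D" using Ax S unfolding bier_def is_facet_pair_def by blast
    have "\<forall>H\<in>bier n D. G \<subseteq> H \<longrightarrow> H = G"
    proof (intro ballI impI)
      fix H assume "H \<in> bier n D" "G \<subseteq> H"
      then obtain B C where BC: "H = bier_vs n B C" "B \<subset> C" "C \<subseteq> {1..n}" "B \<in> D" "C \<notin> D"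
        unfolding bier_def by auto
      have "A \<subseteq> B" "C \<subseteq> insert x A" using \<open>G \<subseteq> H\<close> BC Ax S bv_sub by auto
      have "x \<notin> B" using \<open>A \<subseteq> B\<close> \<open>C \<subseteq> insert x A\<close> BC(2) by blast
      then have "B = A" using \<open>A \<subseteq> B\<close> \<open>C \<subseteq> insert x A\<close> BC(2) by blast
      then have "C = insert x A" using \<open>C \<subseteq> insert x A\<close> BC(2) by blast
      then show "H = G" using BC Ax \<open>B = A\<close> by simp
    qed
    then show "G \<in> facets (bier n D)" using Gin unfolding facets_def by auto
  qed
qed

lemma lex_irrefl: "\<not> lex_less n u u"
  by (auto simp: lex_less_def)

lemma lex_asym: "lex_less n u v \<Longrightarrow> lex_less n v u \<Longrightarrow> False"
proof -
  assume "lex_less n u v" "lex_less n v u"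
  then obtain i j where i: "i \<in> {1..n}" "\<forall>k\<in>{1..<i}. u k = v k" "u i < v i"
    and j: "j \<in> {1..n}" "\<forall>k\<in>{1..<j}. v k = u k" "v j < u j"
    unfolding lex_less_def by blast
  show False
  proof (cases i j rule: linorder_cases)
    case less then show ?thesis using i j by force
  next
    case equal then show ?thesis using i j by auto
  next
    case greater then show ?thesis using i j by force
  qed
qed

lemma key:
  assumes pi: "proper_ideal n D" and fA: "is_facet_pair n D A x" and fB: "is_facet_pair n D B y"
    and lt: "lex_less n (chi B y) (chi A x)"
  shows "(\<exists>a\<in>A. x < a \<and> a \<notin> B) \<or> (\<exists>d\<in>{1..n}. d < x \<and> d \<notin> insert x A \<and> d \<in> insert y B)"
proof (rule ccontr)
  assume H: "\<not> ?thesis"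
  then have h1: "\<And>a. a \<in> A \<Longrightarrow> x < a \<Longrightarrow> a \<in> B"
    and h2: "\<And>d. d \<in> {1..n} \<Longrightarrow> d < x \<Longrightarrow> d \<in> insert y B \<Longrightarrow> d \<in> insert x A" by blast+
  from lt obtain i where i: "i \<in> {1..n}" "\<forall>j\<in>{1..<i}. chi B y j = chi A x j" "chi B y i < chi A x i"
    unfolding lex_less_def by blast
  have ix: "x < i"
  proof (cases "i \<in> insert x A")
    case True
    then show ?thesis using i(3) by (auto simp: chi_def split: if_splits)
  next
    case False
    then have "i \<in> insert y B" using i(3) by (auto simp: chi_def split: if_splits)
    then have "\<not> i < x" using h2 i(1) False by blast
    moreover have "i \<noteq> x" using False by auto
    ultimately show ?thesis by auto
  qed
  have iy: "i \<in> insert y B \<and> i \<le> y"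
  proof (cases "i \<in> insert y B")
    case False
    then have "i \<in> A" "chi A x i = 1" using i(3) ix by (auto simp: chi_def split: if_splits)
    then show ?thesis using h1 ix False by auto
  next
    case True
    then show ?thesis using i(3) by (auto simp: chi_def split: if_splits)
  qed
  have "insert x A \<subseteq> B"
  proof
    fix a assume a: "a \<in> insert x A"
    show "a \<in> B"
    proof (cases "x < a")
      case True then show ?thesis using a h1 by auto
    next
      case False
      have "a \<in> {1..n}" using a fp_sub[OF pi fA] by auto
      then have "a \<in> {1..<i}" using False ix by auto
      then have "chi B y a = chi A x a" using i(2) by blast
      moreover have "chi A x a = -1" using a False by (auto simp: chi_def)
      ultimately have "a \<in> insert y B" by (auto simp: chi_def split: if_splits)
      moreover have "a \<noteq> y" using False ix iy by auto
      ultimately show ?thesis by auto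
    qed
  qed
  then have "insert x A \<in> D" using pi_down[OF pi] fB unfolding is_facet_pair_def by blast
  then show False using fA unfolding is_facet_pair_def by blast
qed


lemma neighbor:
  assumes pi: "proper_ideal n D" and fA: "is_facet_pair n D A x"
    and v: "(\<exists>a\<in>A. x < a \<and> v = Inl a) \<or> (\<exists>d\<in>{1..n}. d < x \<and> d \<notin> insert x A \<and> v = Inr d)"
  shows "\<exists>C z. is_facet_pair n D C z \<and> bier_vs n A (insert x A) - {v} \<subseteq> bier_vs n C (insert z C)
           \<and> lex_less n (chi C z) (chi A x)"
proof -
  have S: "insert x A \<subseteq> {1..n}" using fp_sub[OF pi fA] .
  have AD: "A \<in> D" "x \<notin> A" "insert x A \<notin> D" "x \<in> {1..n}" using fA unfolding is_facet_pair_def by auto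
  from v show ?thesis
  proof
    assume "\<exists>a\<in>A. x < a \<and> v = Inl a"
    then obtain a where a: "a \<in> A" "x < a" "v = Inl a" by blast
    show ?thesis
    proof (cases "insert x (A - {a}) \<in> D")
      case True
      define C where "C = insert x (A - {a})"
      have ins: "insert a C = insert x A" using a unfolding C_def by auto
      have fC: "is_facet_pair n D C a"
        using True a AD S ins unfolding is_facet_pair_def
        by (auto simp: C_def)
      have sub: "bier_vs n A (insert x A) - {v} \<subseteq> bier_vs n C (insert a C)"
        unfolding ins using a
        by (auto simp: bier_vs_def C_def)
      define m where "m = (LEAST j. j \<in> insert x A \<and> x < j \<and> j \<le> a)"
      have P: "a \<in> insert x A \<and> x < a \<and> a \<le> a" using a by auto
      have m: "m \<in> insert x A \<and> x < m \<and> m \<le> a" unfolding m_def by (rule LeastI[where P="\<lambda>j. j \<in> insert x A \<and> x < j \<and> j \<le> a", OF P])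
      have mlt: "\<And>j. j < m \<Longrightarrow> \<not> (j \<in> insert x A \<and> x < j \<and> j \<le> a)"
        unfolding m_def by (rule not_less_Least)
      have "lex_less n (chi C a) (chi A x)"
        unfolding lex_less_def
      proof (intro bexI[of _ m] conjI ballI)
        show "m \<in> {1..n}" using m S by auto
        fix j assume j: "j \<in> {1..<m}"
        have "j \<le> x" if "j \<in> insert x A" using mlt[of j] j m that by auto
        then show "chi C a j = chi A x j" using ins m j unfolding chi_def by auto
      next
        show "chi C a m < chi A x m" using ins m unfolding chi_def by auto
      qed
      then show ?thesis using fC sub by blast
    next
      case False
      define C where "C = A - {a}"
      have fC: "is_facet_pair n D C x"
        using False a AD S pi_down[OF pi AD(1)] unfolding C_def is_facet_pair_def by auto
      have sub: "bier_vs n A (insert x A) - {v} \<subseteq> bier_vs n C (insert x C)"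
        using a by (auto simp: bier_vs_def C_def)
      have "lex_less n (chi C x) (chi A x)"
        unfolding lex_less_def
      proof (intro bexI[of _ a] conjI ballI)
        show "a \<in> {1..n}" using a S by auto
        fix j assume j: "j \<in> {1..<a}"
        then show "chi C x j = chi A x j" unfolding chi_def C_def by auto
      next
        show "chi C x a < chi A x a" using a AD unfolding chi_def C_def by auto
      qed
      then show ?thesis using fC sub by blast
    qed
  next
    assume "\<exists>d\<in>{1..n}. d < x \<and> d \<notin> insert x A \<and> v = Inr d"
    then obtain d where d: "d \<in> {1..n}" "d < x" "d \<notin> insert x A" "v = Inr d" by blast
    show ?thesis
    proof (cases "insert d A \<in> D")
      case True
      define C where "C = insert d A"
      have "insert x A \<subseteq> insert x C" unfolding C_def by auto
      then have "insert x C \<notin> D" using AD(3) pi_down[OF pi] by blast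
      then have fC: "is_facet_pair n D C x"
        using True d AD unfolding C_def is_facet_pair_def by auto
      have sub: "bier_vs n A (insert x A) - {v} \<subseteq> bier_vs n C (insert x C)"
        using d by (auto simp: bier_vs_def C_def)
      have "lex_less n (chi C x) (chi A x)"
        unfolding lex_less_def
      proof (intro bexI[of _ d] conjI ballI)
        show "d \<in> {1..n}" using d by auto
        fix j assume j: "j \<in> {1..<d}"
        then show "chi C x j = chi A x j" unfolding chi_def C_def by auto
      next
        show "chi C x d < chi A x d" using d unfolding chi_def C_def by auto
      qed
      then show ?thesis using fC sub by blast
    next
      case False
      then have fC: "is_facet_pair n D A d"
        using d AD unfolding is_facet_pair_def by auto
      have sub: "bier_vs n A (insert x A) - {v} \<subseteq> bier_vs n A (insert d A)"
        using d by (auto simp: bier_vs_def)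
      have "lex_less n (chi A d) (chi A x)"
        unfolding lex_less_def
      proof (intro bexI[of _ d] conjI ballI)
        show "d \<in> {1..n}" using d by auto
        fix j assume j: "j \<in> {1..<d}"
        then show "chi A d j = chi A x j" using d unfolding chi_def by auto
      next
        show "chi A d d < chi A x d" using d unfolding chi_def by auto
      qed
      then show ?thesis using fC sub by blast
    qed
  qed
qed


lemma bv_finite: "finite B \<Longrightarrow> finite (bier_vs n B C)"
  by (auto simp: bier_vs_def)

theorem mainTheorem8:
  fixes n :: nat and D :: "nat set set" and P :: "(nat set \<times> nat) list"
  assumes "n \<ge> 2"
    and "proper_ideal n D"
    and "set P = {(A, x). is_facet_pair n D A x}"
    and "sorted_wrt (\<lambda>(A, x) (B, y). lex_less n (chi A x) (chi B y)) P"
  shows "shelling_order (bier n D) (map (\<lambda>(A, x). bier_vs n A (insert x A)) P)"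
proof -
  note pi = assms(2)
  define f :: "nat set \<times> nat \<Rightarrow> (nat + nat) set" where "f = (\<lambda>(A, x). bier_vs n A (insert x A))"
  define R where "R = (\<lambda>(A, x) (B, y). lex_less n (chi A x) (chi B y))"
  have srt: "sorted_wrt R P" using assms(4) unfolding R_def .
  have memP: "\<And>A x. (A, x) \<in> set P \<longleftrightarrow> is_facet_pair n D A x" using assms(3) by auto
  have nth_lt: "\<And>i j A x B y. i < j \<Longrightarrow> j < length P \<Longrightarrow> P ! i = (A, x) \<Longrightarrow> P ! j = (B, y)
      \<Longrightarrow> lex_less n (chi A x) (chi B y)"
  proof -
    fix i j A x B y assume "i < j" "j < length P" "P ! i = (A, x)" "P ! j = (B, y)"
    then have "R (P ! i) (P ! j)" using sorted_wrt_nth_less[OF srt] by blast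
    then show "lex_less n (chi A x) (chi B y)" using \<open>P ! i = (A, x)\<close> \<open>P ! j = (B, y)\<close>
      unfolding R_def by simp
  qed
  have distP: "distinct P"
    unfolding distinct_conv_nth
  proof (intro allI impI)
    fix i j assume ij: "i < length P" "j < length P" "i \<noteq> j"
    show "P ! i \<noteq> P ! j"
    proof
      assume eq: "P ! i = P ! j"
      obtain A x where Ax: "P ! i = (A, x)" by (cases "P ! i")
      show False
      proof (cases "i < j")
        case True then show ?thesis using nth_lt[of i j A x A x] ij eq Ax lex_irrefl by simp
      next
        case False then have "j < i" using ij by simp
        then show ?thesis using nth_lt[of j i A x A x] ij eq Ax lex_irrefl by simp
      qed
    qed
  qed
  have injf: "inj_on f (set P)"
  proof
    fix p q assume pq: "p \<in> set P" "q \<in> set P" "f p = f q"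
    obtain A x where p: "p = (A, x)" by (cases p)
    obtain B y where q: "q = (B, y)" by (cases q)
    have fA: "is_facet_pair n D A x" and fB: "is_facet_pair n D B y" using pq p q memP by auto
    have SA: "insert x A \<subseteq> {1..n}" and SB: "insert y B \<subseteq> {1..n}"
      using fp_sub[OF pi fA] fp_sub[OF pi fB] .
    have e: "bier_vs n A (insert x A) = bier_vs n B (insert y B)" using pq p q unfolding f_def by simp
    have "A \<subseteq> B \<and> insert y B \<subseteq> insert x A" using bv_sub[OF SA SB] e by blast
    moreover have "B \<subseteq> A \<and> insert x A \<subseteq> insert y B" using bv_sub[OF SB SA] e by blast
    ultimately have "A = B" "insert x A = insert y B" by auto
    moreover have "x \<notin> A" "y \<notin> B" using fA fB unfolding is_facet_pair_def by auto
    ultimately have "x = y" by blast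
    then show "p = q" using p q \<open>A = B\<close> by simp
  qed
  have idx: "\<And>k A x C z. k < length P \<Longrightarrow> P ! k = (A, x) \<Longrightarrow> (C, z) \<in> set P
      \<Longrightarrow> lex_less n (chi C z) (chi A x) \<Longrightarrow> \<exists>j<k. P ! j = (C, z)"
  proof -
    fix k A x C z assume h: "k < length P" "P ! k = (A, x)" "(C, z) \<in> set P"
      "lex_less n (chi C z) (chi A x)"
    obtain j where j: "j < length P" "P ! j = (C, z)" using h(3) by (auto simp: in_set_conv_nth)
    have "\<not> k \<le> j"
    proof
      assume "k \<le> j"
      then consider "k = j" | "k < j" by linarith
      then show False
      proof cases
        case 1 then show False using h j lex_irrefl by simp
      next
        case 2 then show False using nth_lt[OF 2 j(1) h(2) j(2)] h(4) lex_asym by blast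
      qed
    qed
    then have "j < k" by simp
    then show "\<exists>j<k. P ! j = (C, z)" using j(2) by blast
  qed
  have setF: "set (map f P) = facets (bier n D)"
    using facets_bier[OF pi] assms(3) unfolding f_def by auto
  have dF: "distinct (map f P)" using distP injf by (simp add: distinct_map)
  have shell: "pure_of_dim {G. G \<subseteq> map f P ! k \<and> (\<exists>i<k. G \<subseteq> map f P ! i)} (sdim (map f P ! k) - 1)"
    if k: "1 \<le> k" "k < length P" for k
  proof -
    obtain A x where Pk: "P ! k = (A, x)" by (cases "P ! k")
    have fA: "is_facet_pair n D A x" using Pk k memP nth_mem by metis
    define F where "F = bier_vs n A (insert x A)"
    have Fk: "map f P ! k = F" using k Pk unfolding f_def F_def by simp
    define K where "K = {G. G \<subseteq> map f P ! k \<and> (\<exists>i<k. G \<subseteq> map f P ! i)}"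
    have finF: "finite F" unfolding F_def
      by (rule bv_finite) (use fp_sub[OF pi fA] in \<open>auto intro: finite_subset\<close>)
    have "0 < k" using k by simp
    then have "{} \<in> K" unfolding K_def by blast
    then have Kne: "K \<noteq> {}" by auto
    have "sdim G = sdim F - 1" if G: "G \<in> facets K" for G
    proof -
      have GK: "G \<in> K" and Gmax: "\<And>H. H \<in> K \<Longrightarrow> G \<subseteq> H \<Longrightarrow> H = G"
        using G unfolding facets_def by auto
      obtain i where i: "i < k" "G \<subseteq> map f P ! i" "G \<subseteq> F" using GK Fk unfolding K_def by auto
      obtain B y where Pi: "P ! i = (B, y)" by (cases "P ! i")
      have ilen: "i < length P" using i k by simp
      have fB: "is_facet_pair n D B y" using Pi ilen memP nth_mem by metis
      have Fi: "map f P ! i = bier_vs n B (insert y B)" using ilen Pi unfolding f_def by simp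
      have lt: "lex_less n (chi B y) (chi A x)" using nth_lt[OF i(1) k(2) Pi Pk] .
      obtain v where v: "(\<exists>a\<in>A. x < a \<and> v = Inl a) \<or> (\<exists>d\<in>{1..n}. d < x \<and> d \<notin> insert x A \<and> v = Inr d)"
        and vF: "v \<in> F" and vB: "v \<notin> bier_vs n B (insert y B)"
      proof -
        from key[OF pi fA fB lt] show ?thesis
        proof
          assume "\<exists>a\<in>A. x < a \<and> a \<notin> B"
          then obtain a where "a \<in> A" "x < a" "a \<notin> B" by blast
          then show ?thesis using that[of "Inl a"] unfolding F_def by auto
        next
          assume "\<exists>d\<in>{1..n}. d < x \<and> d \<notin> insert x A \<and> d \<in> insert y B"
          then obtain d where "d \<in> {1..n}" "d < x" "d \<notin> insert x A" "d \<in> insert y B" by blast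
          then show ?thesis using that[of "Inr d"] unfolding F_def by auto
        qed
      qed
      obtain C z where Cz: "is_facet_pair n D C z" "F - {v} \<subseteq> bier_vs n C (insert z C)"
        "lex_less n (chi C z) (chi A x)"
        using neighbor[OF pi fA v] unfolding F_def by blast
      obtain j where j: "j < k" "P ! j = (C, z)" using idx[OF k(2) Pk _ Cz(3)] Cz(1) memP by blast
      have Fj: "map f P ! j = bier_vs n C (insert z C)" using j k unfolding f_def by simp
      have HK: "F - {v} \<in> K" unfolding K_def using Fk Fj j Cz(2) by auto
      have "G \<subseteq> F - {v}" using i vB Fi by auto
      then have "F - {v} = G" using Gmax HK by blast
      moreover have "card (F - {v}) = card F - 1" using vF finF by simp
      moreover have "card F \<ge> 1" using vF finF card_0_eq[of F] by fastforce
      ultimately show ?thesis unfolding sdim_def by auto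
    qed
    then show ?thesis using Kne unfolding pure_of_dim_def K_def Fk by auto
  qed
  show ?thesis
    unfolding shelling_order_def f_def[symmetric]
    using setF dF shell by auto
qed

end
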